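(* Let $A$ be a brick gentle algebra. For any label $w_{\mathcal D}\in\mathcal S$, the string module $M(\mathrm{str}(w_{\mathcal D}))\in\mathcal M$ is a brick as a $\Pi(A)$-module, i.e. $\mathrm{End}_{\Pi(A)}(M(\mathrm{str}(w_{\mathcal D})))=k$.
   Context: Setting: $k$ a field, $A=kQ/I$, $Q$ finite connected quiver, $I$ admissible generated by paths (paths composed right to left). Gentle: (S1) each vertex has at most two incoming and two outgoing arrows; (S2) for each arrow $\alpha$ at most one $\beta$ with $\alpha\beta$ a path not in $I$ and at most one $\gamma$ with $\gamma\alpha$ a path not in $I$; (G1) $I$ generated by paths of length two; (G2) for each arrow $\alpha$ at most one $\beta$ with $\alpha\beta$ a path in $I$ and at most one $\gamma$ with $\gamma\alpha$ a path in $I$. Brick gentle: moreover every indecomposable module has endomorphism ring a division ring. Strings (for any $k\Gamma/J$, $J$ generated by paths): words $w=\gamma_d^{\epsilon_d}\cdots\gamma_1^{\epsilon_1}$ in arrows and formal inverses ($s(\gamma^{-1})=t(\gamma)$, $t(\gamma^{-1})=s(\gamma)$), consecutive letters composable, no $\gamma\gamma^{-1}$ or $\gamma^{-1}\gamma$, neither $w$ nor $w^{-1}$ containing a subword which is a path in $J$; plus length-zero strings; $w\sim w^{-1}$. String module $M(w)$: basis $b_1,\dots,b_{d+1}$, $b_j$ at vertex $x_j$ where $x_1=s(\gamma_1^{\epsilon_1})$, $x_{i+1}=t(\gamma_i^{\epsilon_i})$; $\gamma_i$ sends $b_i\mapsto b_{i+1}$ if $\epsilon_i=1$, $b_{i+1}\mapsto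 b_i$ if $\epsilon_i=-1$; other arrow actions on basis vectors are zero. For $w=\gamma_d^{\epsilon_d}\cdots\gamma_1^{\epsilon_1}\in\mathrm{Str}(A)$ and $1\le j\le d$, $w=w_1\gamma_j^{\epsilon_j}w_2$ gives a break $\{w_1,w_2\}$, with $w_1,w_2$ splits. Labels: $\mathcal S$ = pairs $w_{\mathcal D}=(w,\mathcal D)$, $w\in\mathrm{Str}(A)$ of length $d$, $\mathcal D$ a set of $d$ splits of $w$ no two from the same break (so exactly one from each break), modulo $(w,\mathcal D)\sim(w^{-1},\mathcal D^{-1})$. $\Pi(A)=k\overline Q/\overline I$, where $\overline Q$ adds an arrow $\gamma^*:t(\gamma)\to s(\gamma)$ for each $\gamma\in Q_1$ and $\overline I$ is generated by $\beta\alpha,\alpha^*\beta^*$ for paths $\beta\alpha\in I$ of length two. A string of $\Pi(A)$ specializes to the word obtained by replacing $\gamma^*$ by $\gamma^{-1}$ and $(\gamma^* )^{-1}$ by $\gamma$; $\mathcal M$ is the additive closure in $\mathrm{mod}(\Pi(A))$ of the string modules of strings of $\Pi(A)$ specializing to strings of $A$. The map $\mathrm{str}$: for $w_{\mathcal D}$ with $w=\gamma_d^{\epsilon_d}\cdots\gamma_1^{\epsilon_1}$, $\mathrm{str}(w_{\mathcal D})$ is the word obtained by replacing the $i$-th letter as follows: if $w=u\gamma_iw'$ with $w'\in\mathcal D$, use $\gamma_i$; if $w=u\gamma_i^{-1}w'$ with $w'\in\mathcal D$, use $\gamma_i^*$; if $w=w'\gamma_i^{-1}u$ with $w'\in\mathcal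 D$, use $\gamma_i^{-1}$; if $w=w'\gamma_iu$ with $w'\in\mathcal D$, use $(\gamma_i^* )^{-1}$ (here $u$ is a possibly empty string). This is a string of $\Pi(A)$ specializing to $w$. *)

theory Defs
  imports Main
begin

text \<open>
A bound quiver is given by a vertex set V, an arrow set E,
source and target maps s, t, and a set R of relations (beta, alpha) standing
for the length-two path "beta alpha" (alpha first, then beta; so s beta = t alpha).
The ideal I is the ideal generated by these length-two paths (condition G1).
Paths are lists of arrows written right to left: [g_d, ..., g_1].
\<close>

definition quiver_wf :: "'v set \<Rightarrow> 'a set \<Rightarrow> ('a \<Rightarrow> 'v) \<Rightarrow> ('a \<Rightarrow> 'v) \<Rightarrow> bool" where
  "quiver_wf V E s t \<longleftrightarrow> finite V \<and> finite E \<and> (\<forall>a\<in>E. s a \<in> V \<and> t a \<in> V)"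

definition quiver_connected :: "'v set \<Rightarrow> 'a set \<Rightarrow> ('a \<Rightarrow> 'v) \<Rightarrow> ('a \<Rightarrow> 'v) \<Rightarrow> bool" where
  "quiver_connected V E s t \<longleftrightarrow> V \<noteq> {} \<and>
     (\<forall>x\<in>V. \<forall>y\<in>V. (x, y) \<in> ({(s a, t a) | a. a \<in> E} \<union> {(t a, s a) | a. a \<in> E})\<^sup>*)"

definition rels_wf :: "'a set \<Rightarrow> ('a \<Rightarrow> 'v) \<Rightarrow> ('a \<Rightarrow> 'v) \<Rightarrow> ('a \<times> 'a) set \<Rightarrow> bool" where
  "rels_wf E s t R \<longleftrightarrow> (\<forall>(b, a)\<in>R. b \<in> E \<and> a \<in> E \<and> s b = t a)"

definition is_path :: "'a set \<Rightarrow> ('a \<Rightarrow> 'v) \<Rightarrow> ('a \<Rightarrow> 'v) \<Rightarrow> 'a list \<Rightarrow> bool" where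
  "is_path E s t p \<longleftrightarrow> p \<noteq> [] \<and> set p \<subseteq> E \<and>
     (\<forall>i. Suc i < length p \<longrightarrow> s (p ! i) = t (p ! Suc i))"

text \<open>A path lies in the ideal generated by R iff it contains a relation as a subword.\<close>
definition path_in_ideal :: "('a \<times> 'a) set \<Rightarrow> 'a list \<Rightarrow> bool" where
  "path_in_ideal R p \<longleftrightarrow> (\<exists>i. Suc i < length p \<and> (p ! i, p ! Suc i) \<in> R)"

text \<open>Admissibility: J^n is contained in I for some n (I is contained in J^2 automatically).\<close>
definition admissible :: "'a set \<Rightarrow> ('a \<Rightarrow> 'v) \<Rightarrow> ('a \<Rightarrow> 'v) \<Rightarrow> ('a \<times> 'a) set \<Rightarrow> bool" where
  "admissible E s t R \<longleftrightarrow>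
     (\<exists>n. \<forall>p. is_path E s t p \<and> n \<le> length p \<longrightarrow> path_in_ideal R p)"

definition gentle :: "'v set \<Rightarrow> 'a set \<Rightarrow> ('a \<Rightarrow> 'v) \<Rightarrow> ('a \<Rightarrow> 'v) \<Rightarrow> ('a \<times> 'a) set \<Rightarrow> bool" where
  "gentle V E s t R \<longleftrightarrow>
     quiver_wf V E s t \<and> quiver_connected V E s t \<and> rels_wf E s t R \<and> admissible E s t R \<and>
     \<comment> \<open>(S1)\<close>
     (\<forall>v\<in>V. card {a\<in>E. t a = v} \<le> 2 \<and> card {a\<in>E. s a = v} \<le> 2) \<and>
     \<comment> \<open>(S2)\<close>
     (\<forall>a\<in>E. card {b\<in>E. s a = t b \<and> (a, b) \<notin> R} \<le> 1 \<and>
             card {g\<in>E. s g = t a \<and> (g, a) \<notin> R} \<le> 1) \<and>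
     \<comment> \<open>(G2); (G1) is built into the format of R\<close>
     (\<forall>a\<in>E. card {b\<in>E. s a = t b \<and> (a, b) \<in> R} \<le> 1 \<and>
             card {g\<in>E. s g = t a \<and> (g, a) \<in> R} \<le> 1)"

text \<open>A finite-dimensional module over kQ/I is presented as k^N with a basis
e_0, ..., e_{N-1}, each basis vector e_i lying at the vertex vert i (so the
space is the direct sum of the e_v-parts), and each arrow a acting by the
matrix act a (entry (j, i) = coefficient of e_j in a e_i).\<close>

definition mmul :: "nat \<Rightarrow> (nat \<Rightarrow> nat \<Rightarrow> 'k::semiring_0) \<Rightarrow> (nat \<Rightarrow> nat \<Rightarrow> 'k) \<Rightarrow> nat \<Rightarrow> nat \<Rightarrow> 'k" where
  "mmul N A B = (\<lambda>j i. \<Sum>k<N. A j k * B k i)"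

definition idm :: "nat \<Rightarrow> nat \<Rightarrow> nat \<Rightarrow> 'k::{zero,one}" where
  "idm N = (\<lambda>j i. if j = i \<and> i < N then 1 else 0)"

definition is_rep :: "'v set \<Rightarrow> 'a set \<Rightarrow> ('a \<Rightarrow> 'v) \<Rightarrow> ('a \<Rightarrow> 'v) \<Rightarrow> ('a \<times> 'a) set \<Rightarrow>
    nat \<Rightarrow> (nat \<Rightarrow> 'v) \<Rightarrow> ('a \<Rightarrow> nat \<Rightarrow> nat \<Rightarrow> 'k::field) \<Rightarrow> bool" where
  "is_rep V E s t R N vert act \<longleftrightarrow>
     (\<forall>i<N. vert i \<in> V) \<and>
     (\<forall>a j i. act a j i \<noteq> 0 \<longrightarrow> a \<in> E \<and> i < N \<and> j < N \<and> vert i = s a \<and> vert j = t a) \<and>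
     (\<forall>b a. (b, a) \<in> R \<longrightarrow> mmul N (act b) (act a) = (\<lambda>j i. 0))"

text \<open>Module endomorphisms: commute with the vertex idempotents and all arrows.\<close>
definition is_endo :: "nat \<Rightarrow> (nat \<Rightarrow> 'v) \<Rightarrow> ('a \<Rightarrow> nat \<Rightarrow> nat \<Rightarrow> 'k::field) \<Rightarrow>
    (nat \<Rightarrow> nat \<Rightarrow> 'k) \<Rightarrow> bool" where
  "is_endo N vert act f \<longleftrightarrow>
     (\<forall>j i. f j i \<noteq> 0 \<longrightarrow> i < N \<and> j < N \<and> vert i = vert j) \<and>
     (\<forall>a. mmul N (act a) f = mmul N f (act a))"

text \<open>Indecomposable: nonzero and no nontrivial direct-sum decomposition,
i.e. no idempotent endomorphism other than 0 and 1.\<close>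
definition indecomposable :: "nat \<Rightarrow> (nat \<Rightarrow> 'v) \<Rightarrow> ('a \<Rightarrow> nat \<Rightarrow> nat \<Rightarrow> 'k::field) \<Rightarrow> bool" where
  "indecomposable N vert act \<longleftrightarrow> 0 < N \<and>
     (\<forall>e. is_endo N vert act e \<and> mmul N e e = e \<longrightarrow> e = (\<lambda>j i. 0) \<or> e = idm N)"

definition end_division :: "nat \<Rightarrow> (nat \<Rightarrow> 'v) \<Rightarrow> ('a \<Rightarrow> nat \<Rightarrow> nat \<Rightarrow> 'k::field) \<Rightarrow> bool" where
  "end_division N vert act \<longleftrightarrow>
     (\<forall>f. is_endo N vert act f \<and> f \<noteq> (\<lambda>j i. 0) \<longrightarrow>
        (\<exists>g. is_endo N vert act g \<and> mmul N f g = idm N \<and> mmul N g f = idm N))"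

definition end_is_field :: "nat \<Rightarrow> (nat \<Rightarrow> 'v) \<Rightarrow> ('a \<Rightarrow> nat \<Rightarrow> nat \<Rightarrow> 'k::field) \<Rightarrow> bool" where
  "end_is_field N vert act \<longleftrightarrow>
     (\<forall>f. is_endo N vert act f \<longrightarrow> (\<exists>c. f = (\<lambda>j i. c * idm N j i)))"

definition brick_gentle :: "'k::field itself \<Rightarrow> 'v set \<Rightarrow> 'a set \<Rightarrow> ('a \<Rightarrow> 'v) \<Rightarrow> ('a \<Rightarrow> 'v) \<Rightarrow>
    ('a \<times> 'a) set \<Rightarrow> bool" where
  "brick_gentle _ V E s t R \<longleftrightarrow> gentle V E s t R \<and>
     (\<forall>N (vert :: nat \<Rightarrow> 'v) (act :: 'a \<Rightarrow> nat \<Rightarrow> nat \<Rightarrow> 'k).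
        is_rep V E s t R N vert act \<and> indecomposable N vert act \<longrightarrow> end_division N vert act)"

datatype 'a letter = Dir 'a | Inv 'a

fun larr :: "'a letter \<Rightarrow> 'a" where
  "larr (Dir a) = a" | "larr (Inv a) = a"

fun linv :: "'a letter \<Rightarrow> 'a letter" where
  "linv (Dir a) = Inv a" | "linv (Inv a) = Dir a"

fun lsrc :: "('a \<Rightarrow> 'v) \<Rightarrow> ('a \<Rightarrow> 'v) \<Rightarrow> 'a letter \<Rightarrow> 'v" where
  "lsrc s t (Dir a) = s a" | "lsrc s t (Inv a) = t a"

fun ltgt :: "('a \<Rightarrow> 'v) \<Rightarrow> ('a \<Rightarrow> 'v) \<Rightarrow> 'a letter \<Rightarrow> 'v" where
  "ltgt s t (Dir a) = t a" | "ltgt s t (Inv a) = s a"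

text \<open>A string w = g_d^{e_d} ... g_1^{e_1} is represented by its starting
vertex x = x_1 together with the list L = [g_1^{e_1}, ..., g_d^{e_d}]
(L ! m is the (m+1)-th letter, applied first-to-last).  Length-zero strings
are (x, []).  No subword of w or w^{-1} may be a path in I; since I is generated
by the length-two paths in R, this means no two consecutive direct letters
form a relation in w and no two consecutive inverse letters form a relation in w^{-1}.\<close>
definition is_string :: "'v set \<Rightarrow> 'a set \<Rightarrow> ('a \<Rightarrow> 'v) \<Rightarrow> ('a \<Rightarrow> 'v) \<Rightarrow> ('a \<times> 'a) set \<Rightarrow>
    'v \<Rightarrow> 'a letter list \<Rightarrow> bool" where
  "is_string V E s t R x L \<longleftrightarrow>
     x \<in> V \<and> (\<forall>l\<in>set L. larr l \<in> E) \<and>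
     (L \<noteq> [] \<longrightarrow> lsrc s t (L ! 0) = x) \<and>
     (\<forall>i. Suc i < length L \<longrightarrow>
        ltgt s t (L ! i) = lsrc s t (L ! Suc i) \<and>
        L ! Suc i \<noteq> linv (L ! i) \<and>
        (\<forall>a b. L ! i = Dir a \<and> L ! Suc i = Dir b \<longrightarrow> (b, a) \<notin> R) \<and>
        (\<forall>a b. L ! i = Inv a \<and> L ! Suc i = Inv b \<longrightarrow> (a, b) \<notin> R))"

text \<open>String module M(w): basis b_1..b_{d+1} is indexed 0..d.\<close>
definition smod_vert :: "('a \<Rightarrow> 'v) \<Rightarrow> ('a \<Rightarrow> 'v) \<Rightarrow> 'v \<Rightarrow> 'a letter list \<Rightarrow> nat \<Rightarrow> 'v" where
  "smod_vert s t x L j = (if j = 0 then x else ltgt s t (L ! (j - 1)))"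

definition smod_act :: "'a letter list \<Rightarrow> 'a \<Rightarrow> nat \<Rightarrow> nat \<Rightarrow> 'k::field" where
  "smod_act L a j i =
     (if \<exists>m<length L. (L ! m = Dir a \<and> j = Suc m \<and> i = m) \<or> (L ! m = Inv a \<and> j = m \<and> i = Suc m)
      then 1 else 0)"

datatype 'a parr = Orig 'a | Star 'a

definition PiE :: "'a set \<Rightarrow> 'a parr set" where
  "PiE E = Orig ` E \<union> Star ` E"

fun pis :: "('a \<Rightarrow> 'v) \<Rightarrow> ('a \<Rightarrow> 'v) \<Rightarrow> 'a parr \<Rightarrow> 'v" where
  "pis s t (Orig a) = s a" | "pis s t (Star a) = t a"

fun pit :: "('a \<Rightarrow> 'v) \<Rightarrow> ('a \<Rightarrow> 'v) \<Rightarrow> 'a parr \<Rightarrow> 'v" where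
  "pit s t (Orig a) = t a" | "pit s t (Star a) = s a"

definition PiR :: "('a \<times> 'a) set \<Rightarrow> ('a parr \<times> 'a parr) set" where
  "PiR R = {(Orig b, Orig a) | b a. (b, a) \<in> R} \<union> {(Star a, Star b) | b a. (b, a) \<in> R}"

text \<open>A label (w, D) is given by the string (x, L) of A and a choice c: for the
break at the (m+1)-th letter, c m = True means the split in D is the right-hand
part w' (w = u g w'), c m = False means it is the left-hand part (w = w' g u).\<close>
fun str_letter :: "bool \<Rightarrow> 'a letter \<Rightarrow> 'a parr letter" where
  "str_letter True (Dir g) = Dir (Orig g)"
| "str_letter True (Inv g) = Dir (Star g)"
| "str_letter False (Inv g) = Inv (Orig g)"
| "str_letter False (Dir g) = Inv (Star g)"

definition str :: "'a letter list \<Rightarrow> (nat \<Rightarrow> bool) \<Rightarrow> 'a parr letter list" where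
  "str L c = map (\<lambda>m. str_letter (c m) (L ! m)) [0..<length L]"

end

theory Submission
  imports Defs
begin


lemma sum_single:
  assumes "finite S" "k \<in> S" "\<And>l. l \<in> S \<Longrightarrow> l \<noteq> k \<Longrightarrow> g l = 0"
  shows "sum g S = g k"
proof -
  have "sum g S = g k + sum g (S - {k})" using assms by (simp add: sum.remove)
  also have "sum g (S - {k}) = 0" using assms by (intro sum.neutral) auto
  finally show ?thesis by simp
qed

lemma smod_act_iff:
  "(smod_act L a j i :: 'k::field) \<noteq> 0 \<longleftrightarrow>
    (\<exists>m<length L. (L ! m = Dir a \<and> j = Suc m \<and> i = m) \<or> (L ! m = Inv a \<and> j = m \<and> i = Suc m))"
  by (simp add: smod_act_def)

lemma smod_act_01:
  "(smod_act L a j i :: 'k::field) = (if smod_act L a j i = (0::'k) then 0 else 1)"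
  by (simp add: smod_act_def)

lemma string_rep:
  assumes qw: "quiver_wf V E s t" and st: "is_string V E s t R x L"
  shows "is_rep V E s t R (Suc (length L)) (smod_vert s t x L) (smod_act L :: 'a \<Rightarrow> nat \<Rightarrow> nat \<Rightarrow> 'k::field)"
  unfolding is_rep_def
proof (intro conjI)
  have chain: "\<And>i. Suc i < length L \<Longrightarrow> ltgt s t (L ! i) = lsrc s t (L ! Suc i)"
    using st unfolding is_string_def by blast
  have first: "L \<noteq> [] \<Longrightarrow> lsrc s t (L ! 0) = x" using st unfolding is_string_def by blast
  have inE: "\<And>m. m < length L \<Longrightarrow> larr (L ! m) \<in> E" using st unfolding is_string_def by auto
  have srcv: "\<And>m. m < length L \<Longrightarrow> lsrc s t (L ! m) = smod_vert s t x L m"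
  proof -
    fix m assume "m < length L"
    then show "lsrc s t (L ! m) = smod_vert s t x L m"
      using first chain[of "m - 1"] by (cases m) (auto simp: smod_vert_def)
  qed
  show "\<forall>i<Suc (length L). smod_vert s t x L i \<in> V"
  proof (intro allI impI)
    fix i assume "i < Suc (length L)"
    show "smod_vert s t x L i \<in> V"
    proof (cases i)
      case 0 then show ?thesis using st by (simp add: smod_vert_def is_string_def)
    next
      case (Suc n)
      then have "n < length L" using \<open>i < Suc (length L)\<close> by simp
      then have "larr (L ! n) \<in> E" by (rule inE)
      then show ?thesis using qw Suc unfolding quiver_wf_def smod_vert_def
        by (cases "L ! n") auto
    qed
  qed
  show "\<forall>a j i. (smod_act L a j i :: 'k) \<noteq> 0 \<longrightarrow> a \<in> E \<and> i < Suc (length L) \<and> j < Suc (length L) \<and> smod_vert s t x L i = s a \<and> smod_vert s t x L j = t a"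
  proof (intro allI impI conjI)
  fix a j i
  assume nz: "(smod_act L a j i :: 'k) \<noteq> 0"
  then obtain m where m: "m < length L" and
    c: "(L ! m = Dir a \<and> j = Suc m \<and> i = m) \<or> (L ! m = Inv a \<and> j = m \<and> i = Suc m)"
    by (auto simp: smod_act_iff)
  have "larr (L ! m) \<in> E" using m inE by blast
  then show "a \<in> E" using c by auto
  show "i < Suc (length L)" using c m by auto
  show "j < Suc (length L)" using c m by auto
  show "smod_vert s t x L i = s a"
    using c srcv[OF m] by (auto simp: smod_vert_def)
  show "smod_vert s t x L j = t a"
    using c srcv[OF m] by (auto simp: smod_vert_def)
  qed
next
  show "\<forall>b a. (b, a) \<in> R \<longrightarrow> mmul (Suc (length L)) (smod_act L b) (smod_act L a) = (\<lambda>j i. 0 :: 'k)"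
  proof (intro allI impI)
  fix b a assume ba: "(b, a) \<in> R"
  have rel1: "\<And>i a b. Suc i < length L \<Longrightarrow> L ! i = Dir a \<Longrightarrow> L ! Suc i = Dir b \<Longrightarrow> (b, a) \<notin> R"
    using st unfolding is_string_def by blast
  have rel2: "\<And>i a b. Suc i < length L \<Longrightarrow> L ! i = Inv a \<Longrightarrow> L ! Suc i = Inv b \<Longrightarrow> (a, b) \<notin> R"
    using st unfolding is_string_def by blast
  show "mmul (Suc (length L)) (smod_act L b) (smod_act L a) = (\<lambda>j i. 0 :: 'k)"
    unfolding mmul_def
  proof (intro ext sum.neutral ballI)
    fix k i l
    show "(smod_act L b k l :: 'k) * smod_act L a l i = 0"
    proof (rule ccontr)
      assume "(smod_act L b k l :: 'k) * smod_act L a l i \<noteq> 0"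
      then have h1: "(smod_act L b k l :: 'k) \<noteq> 0" and h2: "(smod_act L a l i :: 'k) \<noteq> 0" by auto
      from h1 obtain m' where m': "m' < length L" and
        c': "(L ! m' = Dir b \<and> k = Suc m' \<and> l = m') \<or> (L ! m' = Inv b \<and> k = m' \<and> l = Suc m')"
        by (auto simp: smod_act_iff)
      from h2 obtain m where m: "m < length L" and
        c: "(L ! m = Dir a \<and> l = Suc m \<and> i = m) \<or> (L ! m = Inv a \<and> l = m \<and> i = Suc m)"
        by (auto simp: smod_act_iff)
      show False using c c' m m' rel1[of m a b] rel2[of m' b a] ba by auto
    qed
  qed
  qed
qed

definition noback :: "'a letter list \<Rightarrow> bool" where
  "noback L \<longleftrightarrow> (\<forall>i. Suc i < length L \<longrightarrow> L ! Suc i \<noteq> linv (L ! i))"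

lemma string_noback: "is_string V E s t R x L \<Longrightarrow> noback L"
  unfolding is_string_def noback_def by blast

lemma smod_act_one:
  "m < length L \<Longrightarrow> L ! m = Dir a \<Longrightarrow> (smod_act L a (Suc m) m :: 'k::field) = 1"
  "m < length L \<Longrightarrow> L ! m = Inv a \<Longrightarrow> (smod_act L a m (Suc m) :: 'k::field) = 1"
  by (auto simp: smod_act_def)

lemma diag_step:
  assumes nb: "noback L" and en: "is_endo (Suc (length L)) vert (smod_act L) (f :: nat \<Rightarrow> nat \<Rightarrow> 'k::field)"
    and m: "m < length L"
  shows "f (Suc m) (Suc m) = f m m"
proof -
  let ?N = "Suc (length L)"
  have nb': "\<And>i. Suc i < length L \<Longrightarrow> L ! Suc i \<noteq> linv (L ! i)" using nb by (simp add: noback_def)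
  have comm: "\<And>a. mmul ?N (smod_act L a) f = mmul ?N f (smod_act L a)"
    using en by (simp add: is_endo_def)
  show ?thesis
  proof (cases "L ! m")
    case (Dir a)
    have "mmul ?N (smod_act L a) f (Suc m) m = smod_act L a (Suc m) m * f m m"
      unfolding mmul_def
    proof (rule sum_single)
      fix l assume "l \<in> {..<?N}" "l \<noteq> m"
      have "(smod_act L a (Suc m) l :: 'k) = 0"
      proof (rule ccontr)
        assume "(smod_act L a (Suc m) l :: 'k) \<noteq> 0"
        then obtain m' where "m' < length L" "(L ! m' = Dir a \<and> Suc m = Suc m' \<and> l = m') \<or> (L ! m' = Inv a \<and> Suc m = m' \<and> l = Suc m')"
          by (auto simp: smod_act_iff)
        then show False using m \<open>l \<noteq> m\<close> Dir nb'[of m] by auto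
      qed
      then show "(smod_act L a (Suc m) l :: 'k) * f l m = 0" by simp
    qed (use m in auto)
    also have "\<dots> = f m m" by (simp add: smod_act_one(1)[OF m Dir, where 'k='k])
    finally have 1: "mmul ?N (smod_act L a) f (Suc m) m = f m m" .
    have "mmul ?N f (smod_act L a) (Suc m) m = f (Suc m) (Suc m) * smod_act L a (Suc m) m"
      unfolding mmul_def
    proof (rule sum_single)
      fix l assume "l \<in> {..<?N}" "l \<noteq> Suc m"
      have "(smod_act L a l m :: 'k) = 0"
      proof (rule ccontr)
        assume "(smod_act L a l m :: 'k) \<noteq> 0"
        then obtain m' where "m' < length L" "(L ! m' = Dir a \<and> l = Suc m' \<and> m = m') \<or> (L ! m' = Inv a \<and> l = m' \<and> m = Suc m')"
          by (auto simp: smod_act_iff)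
        then show False using m \<open>l \<noteq> Suc m\<close> Dir nb'[of "m - 1"] by auto
      qed
      then show "f (Suc m) l * (smod_act L a l m :: 'k) = 0" by simp
    qed (use m in auto)
    also have "\<dots> = f (Suc m) (Suc m)" by (simp add: smod_act_one(1)[OF m Dir, where 'k='k])
    finally have 2: "mmul ?N f (smod_act L a) (Suc m) m = f (Suc m) (Suc m)" .
    show ?thesis using 1 2 comm[of a] by metis
  next
    case (Inv a)
    have "mmul ?N (smod_act L a) f m (Suc m) = smod_act L a m (Suc m) * f (Suc m) (Suc m)"
      unfolding mmul_def
    proof (rule sum_single)
      fix l assume "l \<in> {..<?N}" "l \<noteq> Suc m"
      have "(smod_act L a m l :: 'k) = 0"
      proof (rule ccontr)
        assume "(smod_act L a m l :: 'k) \<noteq> 0"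
        then obtain m' where "m' < length L" "(L ! m' = Dir a \<and> m = Suc m' \<and> l = m') \<or> (L ! m' = Inv a \<and> m = m' \<and> l = Suc m')"
          by (auto simp: smod_act_iff)
        then show False using m \<open>l \<noteq> Suc m\<close> Inv nb'[of "m - 1"] by auto
      qed
      then show "(smod_act L a m l :: 'k) * f l (Suc m) = 0" by simp
    qed (use m in auto)
    also have "\<dots> = f (Suc m) (Suc m)" by (simp add: smod_act_one(2)[OF m Inv, where 'k='k])
    finally have 1: "mmul ?N (smod_act L a) f m (Suc m) = f (Suc m) (Suc m)" .
    have "mmul ?N f (smod_act L a) m (Suc m) = f m m * smod_act L a m (Suc m)"
      unfolding mmul_def
    proof (rule sum_single)
      fix l assume "l \<in> {..<?N}" "l \<noteq> m"
      have "(smod_act L a l (Suc m) :: 'k) = 0"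
      proof (rule ccontr)
        assume "(smod_act L a l (Suc m) :: 'k) \<noteq> 0"
        then obtain m' where "m' < length L" "(L ! m' = Dir a \<and> l = Suc m' \<and> Suc m = m') \<or> (L ! m' = Inv a \<and> l = m' \<and> Suc m = Suc m')"
          by (auto simp: smod_act_iff)
        then show False using m \<open>l \<noteq> m\<close> Inv nb'[of m] by auto
      qed
      then show "f m l * (smod_act L a l (Suc m) :: 'k) = 0" by simp
    qed (use m in auto)
    also have "\<dots> = f m m" by (simp add: smod_act_one(2)[OF m Inv, where 'k='k])
    finally have 2: "mmul ?N f (smod_act L a) m (Suc m) = f m m" .
    show ?thesis using 1 2 comm[of a] by metis
  qed
qed

lemma diag_const:
  assumes nb: "noback L" and en: "is_endo (Suc (length L)) vert (smod_act L) (f :: nat \<Rightarrow> nat \<Rightarrow> 'k::field)"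
  shows "k \<le> length L \<Longrightarrow> f k k = f 0 0"
proof (induction k)
  case (Suc k)
  then show ?case using diag_step[OF nb en, of k] by simp
qed simp

lemma str_len[simp]: "length (str L c) = length L"
  by (simp add: str_def)

lemma str_nth[simp]: "m < length L \<Longrightarrow> str L c ! m = str_letter (c m) (L ! m)"
  by (simp add: str_def)

lemma str_letter_src[simp]: "lsrc (pis s t) (pit s t) (str_letter b l) = lsrc s t l"
  by (cases b; cases l) auto

lemma str_letter_tgt[simp]: "ltgt (pis s t) (pit s t) (str_letter b l) = ltgt s t l"
  by (cases b; cases l) auto

lemma str_letter_arr: "larr (str_letter b l) \<in> PiE E \<longleftrightarrow> larr l \<in> E"
  by (cases b; cases l) (auto simp: PiE_def)

lemma str_letter_inv: "str_letter b' l' = linv (str_letter b l) \<Longrightarrow> l' = linv l"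
  by (cases b; cases l; cases b'; cases l') auto

lemma str_letter_DirOrig: "str_letter b l = Dir (Orig g) \<Longrightarrow> l = Dir g"
  by (cases b; cases l) auto
lemma str_letter_DirStar: "str_letter b l = Dir (Star g) \<Longrightarrow> l = Inv g"
  by (cases b; cases l) auto
lemma str_letter_InvOrig: "str_letter b l = Inv (Orig g) \<Longrightarrow> l = Inv g"
  by (cases b; cases l) auto
lemma str_letter_InvStar: "str_letter b l = Inv (Star g) \<Longrightarrow> l = Dir g"
  by (cases b; cases l) auto

lemma str_vert: "j \<le> length L \<Longrightarrow> smod_vert (pis s t) (pit s t) x (str L c) j = smod_vert s t x L j"
  by (auto simp: smod_vert_def)

lemma quiver_wf_Pi: "quiver_wf V E s t \<Longrightarrow> quiver_wf V (PiE E) (pis s t) (pit s t)"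
  unfolding quiver_wf_def PiE_def by auto

lemma str_string:
  assumes st: "is_string V E s t R x L"
  shows "is_string V (PiE E) (pis s t) (pit s t) (PiR R) x (str L c)"
proof -
  have chain: "\<And>i. Suc i < length L \<Longrightarrow> ltgt s t (L ! i) = lsrc s t (L ! Suc i)"
    and nb: "\<And>i. Suc i < length L \<Longrightarrow> L ! Suc i \<noteq> linv (L ! i)"
    and rel1: "\<And>i a b. Suc i < length L \<Longrightarrow> L ! i = Dir a \<Longrightarrow> L ! Suc i = Dir b \<Longrightarrow> (b, a) \<notin> R"
    and rel2: "\<And>i a b. Suc i < length L \<Longrightarrow> L ! i = Inv a \<Longrightarrow> L ! Suc i = Inv b \<Longrightarrow> (a, b) \<notin> R"
    and xV: "x \<in> V" and inE: "\<forall>l\<in>set L. larr l \<in> E"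
    and first: "L \<noteq> [] \<Longrightarrow> lsrc s t (L ! 0) = x"
    using st unfolding is_string_def by blast+
  show ?thesis unfolding is_string_def
  proof (intro conjI allI impI ballI)
    show "x \<in> V" by (rule xV)
  next
    fix l assume "l \<in> set (str L c)"
    then obtain m where "m < length L" "l = str_letter (c m) (L ! m)" by (auto simp: str_def)
    then show "larr l \<in> PiE E" using inE by (simp add: str_letter_arr)
  next
    assume "str L c \<noteq> []"
    then show "lsrc (pis s t) (pit s t) (str L c ! 0) = x" using first by (simp add: str_def)
  next
    fix i assume i: "Suc i < length (str L c)"
    then show "ltgt (pis s t) (pit s t) (str L c ! i) = lsrc (pis s t) (pit s t) (str L c ! Suc i)"
      using chain by simp
    show "str L c ! Suc i \<noteq> linv (str L c ! i)"
      using i nb str_letter_inv by fastforce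
  next
    fix i a b assume i: "Suc i < length (str L c)"
      and h: "str L c ! i = Dir a \<and> str L c ! Suc i = Dir b"
    show "(b, a) \<notin> PiR R"
    proof
      assume "(b, a) \<in> PiR R"
      then show False
        using i h rel1[of i] rel2[of i] str_letter_DirOrig str_letter_DirStar
        unfolding PiR_def by fastforce
    qed
  next
    fix i a b assume i: "Suc i < length (str L c)"
      and h: "str L c ! i = Inv a \<and> str L c ! Suc i = Inv b"
    show "(a, b) \<notin> PiR R"
    proof
      assume "(a, b) \<in> PiR R"
      then show False
        using i h rel1[of i] rel2[of i] str_letter_InvOrig str_letter_InvStar
        unfolding PiR_def by fastforce
    qed
  qed
qed



lemma lsrc_linv[simp]: "lsrc s t (linv l) = ltgt s t l" by (cases l) auto
lemma ltgt_linv[simp]: "ltgt s t (linv l) = lsrc s t l" by (cases l) auto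
lemma linv_linv[simp]: "linv (linv l) = l" by (cases l) auto
lemma larr_linv[simp]: "larr (linv l) = larr l" by (cases l) auto

lemma string_srcv:
  assumes st: "is_string V E s t R x L" and m: "m < length L"
  shows "lsrc s t (L ! m) = smod_vert s t x L m"
proof -
  have chain: "\<And>i. Suc i < length L \<Longrightarrow> ltgt s t (L ! i) = lsrc s t (L ! Suc i)"
    using st unfolding is_string_def by blast
  have first: "L \<noteq> [] \<Longrightarrow> lsrc s t (L ! 0) = x" using st unfolding is_string_def by blast
  show ?thesis using m first chain[of "m - 1"] by (cases m) (auto simp: smod_vert_def)
qed

lemma string_tgtv: "m < length L \<Longrightarrow> ltgt s t (L ! m) = smod_vert s t x L (Suc m)"
  by (simp add: smod_vert_def)

lemma string_vertV:
  assumes "quiver_wf V E s t" "is_string V E s t R x L" "i \<le> length L"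
  shows "smod_vert s t x L i \<in> V"
proof (cases i)
  case 0 then show ?thesis using assms(2) by (simp add: smod_vert_def is_string_def)
next
  case (Suc n)
  then have "n < length L" using assms(3) by simp
  then have "larr (L ! n) \<in> E" using assms(2) unfolding is_string_def by auto
  then show ?thesis using assms(1) Suc unfolding quiver_wf_def smod_vert_def
    by (cases "L ! n") auto
qed

lemma sub_string:
  assumes qw: "quiver_wf V E s t" and st: "is_string V E s t R x L" and ip: "i + p \<le> length L"
  shows "is_string V E s t R (smod_vert s t x L i) (take p (drop i L))"
    and "k \<le> p \<Longrightarrow> smod_vert s t (smod_vert s t x L i) (take p (drop i L)) k = smod_vert s t x L (i + k)"
proof -
  let ?L = "take p (drop i L)"
  have len: "length ?L = p" using ip by simp
  have nth: "\<And>m. m < p \<Longrightarrow> ?L ! m = L ! (i + m)" using ip by simp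
  have chain: "\<And>i. Suc i < length L \<Longrightarrow> ltgt s t (L ! i) = lsrc s t (L ! Suc i) \<and>
        L ! Suc i \<noteq> linv (L ! i) \<and>
        (\<forall>a b. L ! i = Dir a \<and> L ! Suc i = Dir b \<longrightarrow> (b, a) \<notin> R) \<and>
        (\<forall>a b. L ! i = Inv a \<and> L ! Suc i = Inv b \<longrightarrow> (a, b) \<notin> R)"
    using st unfolding is_string_def by blast
  have inE: "\<forall>l\<in>set L. larr l \<in> E" using st unfolding is_string_def by blast
  show "is_string V E s t R (smod_vert s t x L i) ?L"
    unfolding is_string_def
  proof (intro conjI allI impI ballI)
    show "smod_vert s t x L i \<in> V" using string_vertV[OF qw st] ip by simp
    show "\<And>l. l \<in> set ?L \<Longrightarrow> larr l \<in> E" using inE by (meson in_set_dropD in_set_takeD)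
    show "?L \<noteq> [] \<Longrightarrow> lsrc s t (?L ! 0) = smod_vert s t x L i"
      using string_srcv[OF st, of i] nth[of 0] len by fastforce
    fix j assume j: "Suc j < length ?L"
    then have j': "Suc (i + j) < length L" using ip by simp
    show "ltgt s t (?L ! j) = lsrc s t (?L ! Suc j)" using chain[OF j'] nth j len ip by (simp add: nth_drop)
    show "?L ! Suc j \<noteq> linv (?L ! j)" using chain[OF j'] nth j len ip by (simp add: nth_drop)
    show "\<And>a b. ?L ! j = Dir a \<and> ?L ! Suc j = Dir b \<Longrightarrow> (b, a) \<notin> R" using chain[OF j'] nth j len ip by (simp add: nth_drop)
    show "\<And>a b. ?L ! j = Inv a \<and> ?L ! Suc j = Inv b \<Longrightarrow> (a, b) \<notin> R" using chain[OF j'] nth j len ip by (simp add: nth_drop)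
  qed
  assume k: "k \<le> p"
  show "smod_vert s t (smod_vert s t x L i) ?L k = smod_vert s t x L (i + k)"
  proof (cases k)
    case 0 then show ?thesis by (simp add: smod_vert_def)
  next
    case (Suc n)
    then have "n < p" using k by simp
    then show ?thesis using Suc nth[of n] by (simp add: smod_vert_def)
  qed
qed

lemma rev_string:
  assumes qw: "quiver_wf V E s t" and st: "is_string V E s t R x L"
  shows "is_string V E s t R (smod_vert s t x L (length L)) (rev (map linv L))"
    and "k \<le> length L \<Longrightarrow> smod_vert s t (smod_vert s t x L (length L)) (rev (map linv L)) k = smod_vert s t x L (length L - k)"
proof -
  let ?L = "rev (map linv L)"
  let ?p = "length L"
  have nth: "\<And>m. m < ?p \<Longrightarrow> ?L ! m = linv (L ! (?p - Suc m))" by (simp add: rev_nth)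
  have chain: "\<And>i. Suc i < length L \<Longrightarrow> ltgt s t (L ! i) = lsrc s t (L ! Suc i) \<and>
        L ! Suc i \<noteq> linv (L ! i) \<and>
        (\<forall>a b. L ! i = Dir a \<and> L ! Suc i = Dir b \<longrightarrow> (b, a) \<notin> R) \<and>
        (\<forall>a b. L ! i = Inv a \<and> L ! Suc i = Inv b \<longrightarrow> (a, b) \<notin> R)"
    using st unfolding is_string_def by blast
  have inE: "\<forall>l\<in>set L. larr l \<in> E" using st unfolding is_string_def by blast
  show "is_string V E s t R (smod_vert s t x L ?p) ?L"
    unfolding is_string_def
  proof (intro conjI allI impI ballI)
    show "smod_vert s t x L ?p \<in> V" using string_vertV[OF qw st] by simp
    show "\<And>l. l \<in> set ?L \<Longrightarrow> larr l \<in> E" using inE by auto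
    show "?L \<noteq> [] \<Longrightarrow> lsrc s t (?L ! 0) = smod_vert s t x L ?p"
    proof -
      assume "?L \<noteq> []"
      then have "0 < ?p" by simp
      then show ?thesis using nth[of 0] string_tgtv[of "?p - 1" L s t x] by simp
    qed
    fix j assume j: "Suc j < length ?L"
    then have j': "Suc (?p - Suc (Suc j)) < length L" and e: "Suc (?p - Suc (Suc j)) = ?p - Suc j" by auto
    note c = chain[OF j']
    show "ltgt s t (?L ! j) = lsrc s t (?L ! Suc j)" using c nth j e by simp
    show "?L ! Suc j \<noteq> linv (?L ! j)" using c nth j e by (metis length_map length_rev linv_linv Suc_lessD)
    show "\<And>a b. ?L ! j = Dir a \<and> ?L ! Suc j = Dir b \<Longrightarrow> (b, a) \<notin> R"
    proof -
      fix a b assume "?L ! j = Dir a \<and> ?L ! Suc j = Dir b"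
      then have "L ! (?p - Suc j) = Inv a" "L ! (?p - Suc (Suc j)) = Inv b"
        using nth j by (metis Suc_lessD length_map length_rev linv.simps linv_linv)+
      then show "(b, a) \<notin> R" using c e by simp
    qed
    show "\<And>a b. ?L ! j = Inv a \<and> ?L ! Suc j = Inv b \<Longrightarrow> (a, b) \<notin> R"
    proof -
      fix a b assume "?L ! j = Inv a \<and> ?L ! Suc j = Inv b"
      then have "L ! (?p - Suc j) = Dir a" "L ! (?p - Suc (Suc j)) = Dir b"
        using nth j by (metis Suc_lessD length_map length_rev linv.simps linv_linv)+
      then show "(a, b) \<notin> R" using c e by simp
    qed
  qed
  assume k: "k \<le> ?p"
  show "smod_vert s t (smod_vert s t x L ?p) ?L k = smod_vert s t x L (?p - k)"
  proof (cases k)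
    case 0 then show ?thesis by (simp add: smod_vert_def)
  next
    case (Suc n)
    then have "n < ?p" using k by simp
    then show ?thesis using Suc nth[of n] string_srcv[OF st, of "?p - Suc n"] by (simp add: smod_vert_def)
  qed
qed

definition cycinj :: "('a \<Rightarrow> 'v) \<Rightarrow> ('a \<Rightarrow> 'v) \<Rightarrow> 'v \<Rightarrow> 'a letter list \<Rightarrow> bool" where
  "cycinj s t x L \<longleftrightarrow> (\<forall>k l. k < l \<and> l \<le> length L \<and> \<not> (k = 0 \<and> l = length L) \<longrightarrow>
      smod_vert s t x L k \<noteq> smod_vert s t x L l)"

lemma sum_two:
  assumes "finite S" "k1 \<in> S" "k2 \<in> S" "k1 \<noteq> k2" "\<And>l. l \<in> S \<Longrightarrow> l \<noteq> k1 \<Longrightarrow> l \<noteq> k2 \<Longrightarrow> g l = 0"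
  shows "sum g S = g k1 + g k2"
proof -
  have "sum g S = g k1 + sum g (S - {k1})" using assms by (simp add: sum.remove)
  also have "sum g (S - {k1}) = g k2" using assms by (intro sum_single) auto
  finally show ?thesis .
qed

lemma DD_nonbrick:
  assumes st: "is_string V E s t R x L" and qw: "quiver_wf V E s t"
    and p0: "0 < length L"
    and cl: "smod_vert s t x L 0 = smod_vert s t x L (length L)"
    and cyc: "cycinj s t x L"
    and d0: "L ! 0 = Dir \<alpha>" and d1: "L ! (length L - 1) = Dir \<beta>"
  shows "\<exists>N vert (act :: 'a \<Rightarrow> nat \<Rightarrow> nat \<Rightarrow> 'k::field). is_rep V E s t R N vert act \<and>
           indecomposable N vert act \<and> \<not> end_division N vert act"
proof -
  define p where "p = length L"
  define N where "N = Suc p"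
  let ?v = "smod_vert s t x L"
  let ?act = "smod_act L :: 'a \<Rightarrow> nat \<Rightarrow> nat \<Rightarrow> 'k"
  have pp: "0 < p" using p0 p_def by simp
  have nb: "noback L" by (rule string_noback[OF st])
  have nb': "\<And>i. Suc i < p \<Longrightarrow> L ! Suc i \<noteq> linv (L ! i)" using nb by (simp add: noback_def p_def)
  have rep: "is_rep V E s t R N ?v ?act" unfolding N_def p_def by (rule string_rep[OF qw st])
  define \<phi> :: "nat \<Rightarrow> nat \<Rightarrow> 'k" where "\<phi> = (\<lambda>j i. if j = p \<and> i = 0 then 1 else 0)"
  have actp: "\<And>a k. ?act a k p = 0"
  proof (rule ccontr)
    fix a k assume "?act a k p \<noteq> 0"
    then obtain m where "m < p" "(L ! m = Dir a \<and> k = Suc m \<and> p = m) \<or> (L ! m = Inv a \<and> k = m \<and> p = Suc m)"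
      by (auto simp: smod_act_iff p_def)
    then show False using d1 p_def by auto
  qed
  have act0: "\<And>a i. ?act a 0 i = 0"
  proof (rule ccontr)
    fix a i assume "?act a 0 i \<noteq> 0"
    then obtain m where "m < p" "(L ! m = Dir a \<and> 0 = Suc m \<and> i = m) \<or> (L ! m = Inv a \<and> 0 = m \<and> i = Suc m)"
      by (auto simp: smod_act_iff p_def)
    then show False using d0 by auto
  qed
  have endo_phi: "is_endo N ?v ?act \<phi>"
    unfolding is_endo_def
  proof (intro conjI)
    show "\<forall>j i. \<phi> j i \<noteq> 0 \<longrightarrow> i < N \<and> j < N \<and> ?v i = ?v j" using cl by (auto simp: \<phi>_def N_def p_def)
  next
    show "\<forall>a. mmul N (?act a) \<phi> = mmul N \<phi> (?act a)"
    proof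
    fix a
    have l: "mmul N (?act a) \<phi> = (\<lambda>j i. 0)"
      unfolding mmul_def by (intro ext sum.neutral ballI) (simp add: \<phi>_def actp)
    have r: "mmul N \<phi> (?act a) = (\<lambda>j i. 0)"
      unfolding mmul_def by (intro ext sum.neutral ballI) (simp add: \<phi>_def act0)
    show "mmul N (?act a) \<phi> = mmul N \<phi> (?act a)" using l r by simp
    qed
  qed
  have notdiv: "\<not> end_division N ?v ?act"
  proof
    assume "end_division N ?v ?act"
    moreover have "\<phi> \<noteq> (\<lambda>j i. 0)"
    proof
      assume "\<phi> = (\<lambda>j i. 0)"
      then have "\<phi> p 0 = 0" by simp
      then show False by (simp add: \<phi>_def)
    qed
    ultimately obtain g where "mmul N \<phi> g = idm N" using endo_phi unfolding end_division_def by blast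
    then have "mmul N \<phi> g 0 0 = idm N 0 0" by simp
    moreover have "mmul N \<phi> g 0 0 = 0"
      unfolding mmul_def by (intro sum.neutral ballI) (use pp in \<open>simp add: \<phi>_def\<close>)
    ultimately show False by (simp add: idm_def N_def)
  qed
  have indec: "indecomposable N ?v ?act"
    unfolding indecomposable_def
  proof (intro conjI allI impI)
    show "0 < N" by (simp add: N_def)
    fix e :: "nat \<Rightarrow> nat \<Rightarrow> 'k"
    assume h: "is_endo N ?v ?act e \<and> mmul N e e = e"
    then have en: "is_endo N ?v ?act e" and idem: "mmul N e e = e" by auto
    have en': "is_endo (Suc (length L)) ?v ?act e" using en by (simp add: N_def p_def)
    define a where "a = e 0 0"
    define b where "b = e p 0"
    have dg: "\<And>k. k \<le> p \<Longrightarrow> e k k = a"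
      unfolding a_def p_def by (rule diag_const[OF nb en'])
    have supp: "\<And>j i. e j i \<noteq> 0 \<Longrightarrow> i < N \<and> j < N \<and> (j = i \<or> (j = p \<and> i = 0) \<or> (j = 0 \<and> i = p))"
    proof -
      fix j i assume "e j i \<noteq> 0"
      then have h: "i < N" "j < N" "?v i = ?v j" using en unfolding is_endo_def by blast+
      have "j = i \<or> (j = p \<and> i = 0) \<or> (j = 0 \<and> i = p)"
      proof (rule ccontr)
        assume c: "\<not> ?thesis"
        show False
        proof (cases "i < j")
          case True
          then show False using cyc h c unfolding cycinj_def N_def p_def by (metis less_Suc_eq_le)
        next
          case False
          then have "j < i" using c by simp
          then show False using cyc h c unfolding cycinj_def N_def p_def by (metis less_Suc_eq_le)
        qed
      qed
      then show "i < N \<and> j < N \<and> (j = i \<or> (j = p \<and> i = 0) \<or> (j = 0 \<and> i = p))" using h by simp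
    qed
    have e0p: "e 0 p = 0"
    proof -
      have comm: "mmul N (?act \<alpha>) e = mmul N e (?act \<alpha>)" using en by (simp add: is_endo_def)
      have "mmul N (?act \<alpha>) e 1 p = ?act \<alpha> 1 0 * e 0 p"
        unfolding mmul_def
      proof (rule sum_single)
        fix l assume "l \<in> {..<N}" "l \<noteq> 0"
        have "?act \<alpha> 1 l = 0"
        proof (rule ccontr)
          assume "?act \<alpha> 1 l \<noteq> 0"
          then obtain m where "m < p" "(L ! m = Dir \<alpha> \<and> 1 = Suc m \<and> l = m) \<or> (L ! m = Inv \<alpha> \<and> 1 = m \<and> l = Suc m)"
            by (auto simp: smod_act_iff p_def)
          then show False using \<open>l \<noteq> 0\<close> d0 nb'[of 0] by auto
        qed
        then show "?act \<alpha> 1 l * e l p = 0" by simp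
      qed (auto simp: N_def)
      also have "\<dots> = e 0 p" using smod_act_one(1)[OF p0 d0, where 'k='k] by simp
      finally have 1: "mmul N (?act \<alpha>) e 1 p = e 0 p" .
      have 2: "mmul N e (?act \<alpha>) 1 p = 0"
        unfolding mmul_def by (intro sum.neutral ballI) (simp add: actp)
      show ?thesis using 1 2 comm by metis
    qed
    have eform: "\<And>j i. e j i = (if j = i \<and> i < N then a else if j = p \<and> i = 0 then b else 0)"
    proof -
      fix j i
      show "e j i = (if j = i \<and> i < N then a else if j = p \<and> i = 0 then b else 0)"
      proof (cases "e j i = 0")
        case True
        then show ?thesis using dg[of i] b_def by (auto simp: N_def)
      next
        case False
        then show ?thesis using supp[OF False] dg[of i] b_def e0p pp by (auto simp: N_def)
      qed
    qed
    have "mmul N e e 0 0 = e 0 0 * e 0 0"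
      unfolding mmul_def by (rule sum_single) (use pp in \<open>auto simp: eform N_def\<close>)
    then have aa: "a * a = a" using idem a_def by metis
    have "mmul N e e p 0 = e p p * e p 0 + e p 0 * e 0 0"
      unfolding mmul_def by (rule sum_two) (use pp in \<open>auto simp: eform N_def\<close>)
    then have "a * b + b * a = b" using idem a_def b_def dg[of p] by (metis order_refl)
    then have ab: "2 * a * b = b" by (simp add: algebra_simps)
    from aa have "a = 0 \<or> a = 1" by (metis mult_cancel_right2 mult_zero_left)
    then show "e = (\<lambda>j i. 0) \<or> e = idm N"
    proof
      assume a0: "a = 0"
      then have "b = 0" using ab by (metis mult_zero_right mult_zero_left)
      then have "e = (\<lambda>j i. 0)" using a0 by (auto simp: eform fun_eq_iff)
      then show ?thesis by simp
    next
      assume a1: "a = 1"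
      then have "2 * b = b" using ab by (metis mult_1_right mult.commute)
      then have "b + b = b + 0" by (metis mult_2 add_0_right)
      then have "b = 0" by (rule add_left_imp_eq)
      then have "e = idm N" unfolding fun_eq_iff idm_def using a1 by (subst eform) simp
      then show ?thesis by simp
    qed
  qed
  show ?thesis using rep indec notdiv by blast
qed



fun isDir :: "'a letter \<Rightarrow> bool" where
  "isDir (Dir _) = True" | "isDir (Inv _) = False"

definition nxt :: "nat \<Rightarrow> nat \<Rightarrow> nat" where
  "nxt p k = (if Suc k = p then 0 else Suc k)"

definition bsrc :: "'a letter list \<Rightarrow> nat \<Rightarrow> nat" where
  "bsrc L m = (if isDir (L ! m) then m else nxt (length L) m)"

definition btgt :: "'a letter list \<Rightarrow> nat \<Rightarrow> nat" where
  "btgt L m = (if isDir (L ! m) then nxt (length L) m else m)"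

definition bentry :: "'a letter list \<Rightarrow> nat \<Rightarrow> nat \<Rightarrow> nat \<Rightarrow> bool" where
  "bentry L m j i \<longleftrightarrow> (i = bsrc L m \<and> j = btgt L m) \<or>
     (i = bsrc L m + length L \<and> j = btgt L m + length L) \<or>
     (Suc m = length L \<and> i = bsrc L m + length L \<and> j = btgt L m)"

definition band_act :: "'a letter list \<Rightarrow> 'a \<Rightarrow> nat \<Rightarrow> nat \<Rightarrow> 'k::field" where
  "band_act L a j i = (if \<exists>m<length L. larr (L ! m) = a \<and> bentry L m j i then 1 else 0)"

definition bpos :: "nat \<Rightarrow> nat \<Rightarrow> nat" where
  "bpos p i = (if i < p then i else i - p)"

definition band_vert :: "('a \<Rightarrow> 'v) \<Rightarrow> ('a \<Rightarrow> 'v) \<Rightarrow> 'v \<Rightarrow> 'a letter list \<Rightarrow> nat \<Rightarrow> 'v" where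
  "band_vert s t x L i = smod_vert s t x L (bpos (length L) i)"

lemma isDir_cases: "isDir l \<Longrightarrow> l = Dir (larr l)" "\<not> isDir l \<Longrightarrow> l = Inv (larr l)"
  by (cases l; simp)+

locale bandset =
  fixes V :: "'v set" and E :: "'a set" and s t :: "'a \<Rightarrow> 'v" and R :: "('a \<times> 'a) set"
    and x :: 'v and L :: "'a letter list"
  assumes st: "is_string V E s t R x L" and qw: "quiver_wf V E s t"
    and p2: "2 \<le> length L"
    and cl: "smod_vert s t x L 0 = smod_vert s t x L (length L)"
    and cyc: "cycinj s t x L"
    and mixed: "isDir (L ! 0) \<noteq> isDir (L ! (length L - 1))"
begin

abbreviation "p \<equiv> length L"
abbreviation "v \<equiv> smod_vert s t x L"

lemma vinj: "k < p \<Longrightarrow> l < p \<Longrightarrow> v k = v l \<Longrightarrow> k = l"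
  using cyc unfolding cycinj_def by (metis less_imp_le less_not_refl linorder_neqE_nat)

lemma nxt_lt: "m < p \<Longrightarrow> nxt p m < p"
  using p2 by (auto simp: nxt_def)

lemma nxt_ne: "m < p \<Longrightarrow> nxt p m \<noteq> m"
  using p2 by (auto simp: nxt_def)

lemma nxt_inj: "m < p \<Longrightarrow> m' < p \<Longrightarrow> nxt p m = nxt p m' \<Longrightarrow> m = m'"
  by (auto simp: nxt_def split: if_splits)

lemma bsrc_lt: "m < p \<Longrightarrow> bsrc L m < p" using nxt_lt by (simp add: bsrc_def)
lemma btgt_lt: "m < p \<Longrightarrow> btgt L m < p" using nxt_lt by (simp add: btgt_def)
lemma bsrc_ne: "m < p \<Longrightarrow> bsrc L m \<noteq> btgt L m" using nxt_ne[of m] by (auto simp: bsrc_def btgt_def)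

lemma v_nxt: "m < p \<Longrightarrow> v (nxt p m) = ltgt s t (L ! m)"
proof (cases "Suc m = p")
  case True
  then have "L \<noteq> []" "m = p - 1" by auto
  then show ?thesis using cl True by (simp add: nxt_def smod_vert_def)
qed (simp add: nxt_def smod_vert_def)

lemma v_m: "m < p \<Longrightarrow> v m = lsrc s t (L ! m)"
  using string_srcv[OF st] by simp

lemma v_bsrc: "m < p \<Longrightarrow> v (bsrc L m) = s (larr (L ! m))"
  using v_nxt v_m by (cases "L ! m") (auto simp: bsrc_def)

lemma v_btgt: "m < p \<Longrightarrow> v (btgt L m) = t (larr (L ! m))"
  using v_nxt v_m by (cases "L ! m") (auto simp: btgt_def)

lemma nb': "Suc i < p \<Longrightarrow> L ! Suc i \<noteq> linv (L ! i)"
  using string_noback[OF st] by (simp add: noback_def)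

lemma uniq:
  assumes m: "m < p" and m': "m' < p" and eq: "larr (L ! m) = larr (L ! m')"
  shows "m = m'"
proof (cases "L ! m")
  case (Dir a) note dm = Dir
  show ?thesis
  proof (cases "L ! m'")
    case (Dir b)
    then show ?thesis using dm eq v_m[OF m] v_m[OF m'] vinj[OF m m'] by simp
  next
    case (Inv b)
    then have ab: "b = a" using dm eq by simp
    have 1: "v m = v (nxt p m')" using v_m[OF m] v_nxt[OF m'] dm Inv ab by simp
    have 2: "v (nxt p m) = v m'" using v_m[OF m'] v_nxt[OF m] dm Inv ab by simp
    have e1: "m = nxt p m'" using vinj[OF m nxt_lt[OF m'] 1] .
    have e2: "nxt p m = m'" using vinj[OF nxt_lt[OF m] m' 2] .
    show ?thesis
    proof (rule ccontr)
      assume ne: "m \<noteq> m'"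
      have "p = 2 \<and> ((m = 0 \<and> m' = 1) \<or> (m = 1 \<and> m' = 0))"
        using e1 e2 m m' ne by (auto simp: nxt_def split: if_splits)
      then show False using nb'[of 0] dm Inv ab by auto
    qed
  qed
next
  case (Inv a) note dm = Inv
  show ?thesis
  proof (cases "L ! m'")
    case (Inv b)
    then show ?thesis using dm eq v_nxt[OF m] v_nxt[OF m'] vinj[OF nxt_lt[OF m] nxt_lt[OF m']] nxt_inj[OF m m'] by simp
  next
    case (Dir b)
    then have ab: "b = a" using dm eq by simp
    have 1: "v m' = v (nxt p m)" using v_m[OF m'] v_nxt[OF m] dm Dir ab by simp
    have 2: "v (nxt p m') = v m" using v_m[OF m] v_nxt[OF m'] dm Dir ab by simp
    have e1: "m' = nxt p m" using vinj[OF m' nxt_lt[OF m] 1] .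
    have e2: "nxt p m' = m" using vinj[OF nxt_lt[OF m'] m 2] .
    show ?thesis
    proof (rule ccontr)
      assume ne: "m \<noteq> m'"
      have "p = 2 \<and> ((m = 0 \<and> m' = 1) \<or> (m = 1 \<and> m' = 0))"
        using e1 e2 m m' ne by (auto simp: nxt_def split: if_splits)
      then show False using nb'[of 0] dm Dir ab by auto
    qed
  qed
qed

lemma act_m: "m < p \<Longrightarrow> (band_act L (larr (L ! m)) :: nat \<Rightarrow> nat \<Rightarrow> 'k::field) = (\<lambda>j i. if bentry L m j i then 1 else 0)"
  using uniq by (auto simp: band_act_def fun_eq_iff)

lemma act_none: "\<forall>m<p. larr (L ! m) \<noteq> a \<Longrightarrow> (band_act L a :: nat \<Rightarrow> nat \<Rightarrow> 'k::field) = (\<lambda>j i. 0)"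
  by (auto simp: band_act_def fun_eq_iff)

lemma bentry_pos:
  assumes m: "m < p" and b: "bentry L m j i"
  shows "i < 2 * p" "j < 2 * p" "bpos p i = bsrc L m" "bpos p j = btgt L m"
  using b bsrc_lt[OF m] btgt_lt[OF m] by (auto simp: bentry_def bpos_def)


lemma band_rep: "is_rep V E s t R (2 * p) (band_vert s t x L) (band_act L :: 'a \<Rightarrow> nat \<Rightarrow> nat \<Rightarrow> 'k::field)"
  unfolding is_rep_def
proof (intro conjI)
  show "\<forall>i<2 * p. band_vert s t x L i \<in> V"
  proof (intro allI impI)
    fix i assume "i < 2 * p"
    then have "bpos p i \<le> p" by (auto simp: bpos_def)
    then show "band_vert s t x L i \<in> V" unfolding band_vert_def using string_vertV[OF qw st] by blast
  qed
  show "\<forall>a j i. (band_act L a j i :: 'k) \<noteq> 0 \<longrightarrow> a \<in> E \<and> i < 2 * p \<and> j < 2 * p \<and>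
      band_vert s t x L i = s a \<and> band_vert s t x L j = t a"
  proof (intro allI impI)
    fix a j i assume "(band_act L a j i :: 'k) \<noteq> 0"
    then obtain m where m: "m < p" "larr (L ! m) = a" "bentry L m j i"
      by (auto simp: band_act_def split: if_splits)
    have "a \<in> E" using st m unfolding is_string_def by auto
    then show "a \<in> E \<and> i < 2 * p \<and> j < 2 * p \<and> band_vert s t x L i = s a \<and> band_vert s t x L j = t a"
      using bentry_pos[OF m(1,3)] v_bsrc[OF m(1)] v_btgt[OF m(1)] m(2) by (simp add: band_vert_def)
  qed
  show "\<forall>b a. (b, a) \<in> R \<longrightarrow> mmul (2 * p) (band_act L b) (band_act L a) = (\<lambda>j i. 0 :: 'k)"
  proof (intro allI impI)
    fix b a assume ba: "(b, a) \<in> R"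
    have rel1: "\<And>i a b. Suc i < p \<Longrightarrow> L ! i = Dir a \<Longrightarrow> L ! Suc i = Dir b \<Longrightarrow> (b, a) \<notin> R"
      using st unfolding is_string_def by blast
    have rel2: "\<And>i a b. Suc i < p \<Longrightarrow> L ! i = Inv a \<Longrightarrow> L ! Suc i = Inv b \<Longrightarrow> (a, b) \<notin> R"
      using st unfolding is_string_def by blast
    show "mmul (2 * p) (band_act L b) (band_act L a) = (\<lambda>j i. 0 :: 'k)"
      unfolding mmul_def
    proof (intro ext sum.neutral ballI)
      fix k i l
      show "(band_act L b k l :: 'k) * band_act L a l i = 0"
      proof (rule ccontr)
        assume "(band_act L b k l :: 'k) * band_act L a l i \<noteq> 0"
        then obtain m m' where m: "m < p" "larr (L ! m) = a" "bentry L m l i"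
          and m': "m' < p" "larr (L ! m') = b" "bentry L m' k l"
          by (auto simp: band_act_def split: if_splits)
        have eq: "btgt L m = bsrc L m'" using bentry_pos(4)[OF m(1,3)] bentry_pos(3)[OF m'(1,3)] by simp
        show False
        proof (cases "isDir (L ! m)")
          case dm: True
          then have Lm: "L ! m = Dir a" using isDir_cases(1)[OF dm] m(2) by simp
          show False
          proof (cases "isDir (L ! m')")
            case dm': True
            then have Lm': "L ! m' = Dir b" using isDir_cases(1)[OF dm'] m'(2) by simp
            have "nxt p m = m'" using eq dm dm' by (simp add: bsrc_def btgt_def)
            then have "(Suc m < p \<and> m' = Suc m) \<or> (Suc m = p \<and> m' = 0)" using m(1) by (auto simp: nxt_def split: if_splits)
            then show False
            proof
              assume "Suc m < p \<and> m' = Suc m"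
              then show False using rel1[of m a b] Lm Lm' ba by auto
            next
              assume h: "Suc m = p \<and> m' = 0"
              then have "m = p - 1" by linarith
              then show False using mixed dm dm' h by simp
            qed
          next
            case dm': False
            have "nxt p m = nxt p m'" using eq dm dm' by (simp add: bsrc_def btgt_def)
            then have "m = m'" using nxt_inj m(1) m'(1) by blast
            then show False using dm dm' by simp
          qed
        next
          case dm: False
          then have Lm: "L ! m = Inv a" using isDir_cases(2)[OF dm] m(2) by simp
          show False
          proof (cases "isDir (L ! m')")
            case dm': True
            have "m = m'" using eq dm dm' by (simp add: bsrc_def btgt_def)
            then show False using dm dm' by simp
          next
            case dm': False
            then have Lm': "L ! m' = Inv b" using isDir_cases(2)[OF dm'] m'(2) by simp
            have "m = nxt p m'" using eq dm dm' by (simp add: bsrc_def btgt_def)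
            then have "(Suc m' < p \<and> m = Suc m') \<or> (Suc m' = p \<and> m = 0)" using m'(1) by (auto simp: nxt_def split: if_splits)
            then show False
            proof
              assume "Suc m' < p \<and> m = Suc m'"
              then show False using rel2[of m' b a] Lm Lm' ba by auto
            next
              assume h: "Suc m' = p \<and> m = 0"
              then have "m' = p - 1" by linarith
              then show False using mixed dm dm' h by simp
            qed
          qed
        qed
      qed
    qed
  qed
qed

definition phi :: "nat \<Rightarrow> nat \<Rightarrow> 'k::field" where
  "phi j i = (if p \<le> i \<and> i < 2 * p \<and> j = i - p then 1 else 0)"

definition Bm :: "nat \<Rightarrow> nat \<Rightarrow> nat \<Rightarrow> 'k::field" where
  "Bm m j i = (if bentry L m j i then 1 else 0)"

lemma Bm_phi: "mmul (2 * p) (Bm m) phi j i = (if p \<le> i \<and> i < 2 * p \<and> bentry L m j (i - p) then 1 else (0 :: 'k::field))"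
proof (cases "p \<le> i \<and> i < 2 * p")
  case True
  have "mmul (2 * p) (Bm m) phi j i = (Bm m j (i - p) :: 'k) * phi (i - p) i"
    unfolding mmul_def by (rule sum_single) (use True in \<open>auto simp: phi_def\<close>)
  then show ?thesis using True by (simp add: Bm_def phi_def)
next
  case False
  have "mmul (2 * p) (Bm m) phi j i = (0::'k)"
    unfolding mmul_def by (rule sum.neutral) (use False in \<open>auto simp: phi_def\<close>)
  then show ?thesis using False by auto
qed

lemma phi_Bm: "mmul (2 * p) phi (Bm m) j i = (if j < p \<and> bentry L m (j + p) i then 1 else (0 :: 'k::field))"
proof (cases "j < p")
  case True
  have "mmul (2 * p) phi (Bm m) j i = (phi j (j + p) :: 'k) * Bm m (j + p) i"
    unfolding mmul_def by (rule sum_single) (use True in \<open>auto simp: phi_def\<close>)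
  then show ?thesis using True by (simp add: Bm_def phi_def)
next
  case False
  have "mmul (2 * p) phi (Bm m) j i = (0::'k)"
    unfolding mmul_def by (rule sum.neutral) (use False in \<open>auto simp: phi_def\<close>)
  then show ?thesis using False by simp
qed

lemma bentry_shift:
  assumes m: "m < p"
  shows "(p \<le> i \<and> i < 2 * p \<and> bentry L m j (i - p)) \<longleftrightarrow> (j < p \<and> bentry L m (j + p) i)"
  using bsrc_lt[OF m] btgt_lt[OF m] unfolding bentry_def by auto

lemma phi_endo: "is_endo (2 * p) (band_vert s t x L) (band_act L) (phi :: nat \<Rightarrow> nat \<Rightarrow> 'k::field)"
  unfolding is_endo_def
proof (intro conjI)
  show "\<forall>j i. (phi j i :: 'k) \<noteq> 0 \<longrightarrow> i < 2 * p \<and> j < 2 * p \<and> band_vert s t x L i = band_vert s t x L j"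
    by (auto simp: phi_def band_vert_def bpos_def)
  show "\<forall>a. mmul (2 * p) (band_act L a) phi = mmul (2 * p) (phi :: nat \<Rightarrow> nat \<Rightarrow> 'k) (band_act L a)"
  proof
    fix a
    show "mmul (2 * p) (band_act L a) phi = mmul (2 * p) (phi :: nat \<Rightarrow> nat \<Rightarrow> 'k) (band_act L a)"
    proof (cases "\<exists>m<p. larr (L ! m) = a")
      case True
      then obtain m where m: "m < p" "larr (L ! m) = a" by blast
      have eq: "band_act L a = (Bm m :: nat \<Rightarrow> nat \<Rightarrow> 'k)" using act_m[OF m(1)] m(2) by (simp add: Bm_def[abs_def])
      show ?thesis unfolding eq by (simp add: fun_eq_iff Bm_phi phi_Bm bentry_shift[OF m(1)])
    next
      case False
      then have "band_act L a = (\<lambda>j i. 0 :: 'k)" using act_none by blast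
      then show ?thesis by (simp add: mmul_def)
    qed
  qed
qed

lemma band_notdiv: "\<not> end_division (2 * p) (band_vert s t x L) (band_act L :: 'a \<Rightarrow> nat \<Rightarrow> nat \<Rightarrow> 'k::field)"
proof
  assume "end_division (2 * p) (band_vert s t x L) (band_act L :: 'a \<Rightarrow> nat \<Rightarrow> nat \<Rightarrow> 'k)"
  moreover have "(phi :: nat \<Rightarrow> nat \<Rightarrow> 'k) \<noteq> (\<lambda>j i. 0)"
  proof
    assume "(phi :: nat \<Rightarrow> nat \<Rightarrow> 'k) = (\<lambda>j i. 0)"
    then have "(phi 0 p :: 'k) = 0" by simp
    moreover have "L \<noteq> []" using p2 by auto
    ultimately show False by (simp add: phi_def)
  qed
  ultimately obtain g where "mmul (2 * p) (phi :: nat \<Rightarrow> nat \<Rightarrow> 'k) g = idm (2 * p)"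
    using phi_endo unfolding end_division_def by blast
  then have "mmul (2 * p) (phi :: nat \<Rightarrow> nat \<Rightarrow> 'k) g p p = idm (2 * p) p p" by simp
  moreover have "mmul (2 * p) (phi :: nat \<Rightarrow> nat \<Rightarrow> 'k) g p p = 0"
    unfolding mmul_def by (intro sum.neutral ballI) (auto simp: phi_def)
  moreover have "L \<noteq> []" using p2 by auto
  ultimately show False by (simp add: idm_def)
qed

lemma bpos_lt: "i < 2 * p \<Longrightarrow> bpos p i < p"
  by (auto simp: bpos_def)

context
  fixes e :: "nat \<Rightarrow> nat \<Rightarrow> 'k::field"
  assumes en: "is_endo (2 * p) (band_vert s t x L) (band_act L) e"
begin

lemma e_supp: "e j i \<noteq> 0 \<Longrightarrow> i < 2 * p \<and> j < 2 * p \<and> bpos p j = bpos p i"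
proof -
  assume "e j i \<noteq> 0"
  then have h: "i < 2 * p" "j < 2 * p" "band_vert s t x L i = band_vert s t x L j"
    using en unfolding is_endo_def by blast+
  then show ?thesis using vinj[OF bpos_lt[OF h(2)] bpos_lt[OF h(1)]] by (simp add: band_vert_def)
qed

lemma LS:
  assumes i: "i < 2 * p"
  shows "mmul (2 * p) A e j i = A j (bpos p i) * e (bpos p i) i + A j (bpos p i + p) * e (bpos p i + p) i"
  unfolding mmul_def
proof (rule sum_two)
  fix l assume "l \<in> {..<2 * p}" "l \<noteq> bpos p i" "l \<noteq> bpos p i + p"
  have "e l i = 0"
  proof (rule ccontr)
    assume nz: "e l i \<noteq> 0"
    from e_supp[OF nz] show False using \<open>l \<noteq> bpos p i\<close> \<open>l \<noteq> bpos p i + p\<close>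
      by (auto simp: bpos_def split: if_splits)
  qed
  then show "A j l * e l i = 0" by simp
qed (use bpos_lt[OF i] p2 in auto)

lemma RS:
  assumes j: "j < 2 * p"
  shows "mmul (2 * p) e A j i = e j (bpos p j) * A (bpos p j) i + e j (bpos p j + p) * A (bpos p j + p) i"
  unfolding mmul_def
proof (rule sum_two)
  fix l assume "l \<in> {..<2 * p}" "l \<noteq> bpos p j" "l \<noteq> bpos p j + p"
  have "e j l = 0"
  proof (rule ccontr)
    assume nz: "e j l \<noteq> 0"
    from e_supp[OF nz] show False using \<open>l \<noteq> bpos p j\<close> \<open>l \<noteq> bpos p j + p\<close>
      by (auto simp: bpos_def split: if_splits)
  qed
  then show "e j l * A l i = 0" by simp
qed (use bpos_lt[OF j] p2 in auto)

lemma letter_eqs: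
  assumes m: "m < p"
  defines "sp \<equiv> bsrc L m" and "tp \<equiv> btgt L m" and "lst \<equiv> Suc m = p"
  shows "e sp sp + (if lst then e (sp + p) sp else 0) = e tp tp"
    and "e sp (sp + p) + (if lst then e (sp + p) (sp + p) else 0) = (if lst then e tp tp else 0) + e tp (tp + p)"
    and "e (sp + p) sp = e (tp + p) tp"
    and "e (sp + p) (sp + p) = (if lst then e (tp + p) tp else 0) + e (tp + p) (tp + p)"
proof -
  have spl: "sp < p" and tpl: "tp < p" and ne: "sp \<noteq> tp"
    using bsrc_lt[OF m] btgt_lt[OF m] bsrc_ne[OF m] by (auto simp: sp_def tp_def)
  have eq: "band_act L (larr (L ! m)) = (Bm m :: nat \<Rightarrow> nat \<Rightarrow> 'k)" using act_m[OF m] by (simp add: Bm_def[abs_def])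
  have comm: "mmul (2 * p) (Bm m) e = mmul (2 * p) e (Bm m)"
    using en eq unfolding is_endo_def by metis
  have B: "\<And>j i. (Bm m j i :: 'k) = (if (i = sp \<and> j = tp) \<or> (i = sp + p \<and> j = tp + p) \<or> (lst \<and> i = sp + p \<and> j = tp) then 1 else 0)"
    by (simp add: Bm_def bentry_def sp_def tp_def lst_def)
  have Lne: "L \<noteq> []" using p2 by auto
  have bp: "bpos p sp = sp" "bpos p (sp + p) = sp" "bpos p tp = tp" "bpos p (tp + p) = tp"
    using spl tpl by (auto simp: bpos_def)
  have C: "\<And>j i. j < 2 * p \<Longrightarrow> i < 2 * p \<Longrightarrow> mmul (2 * p) (Bm m) e j i = mmul (2 * p) e (Bm m) j i"
    using comm by simp
  from C[of tp sp] spl tpl show "e sp sp + (if lst then e (sp + p) sp else 0) = e tp tp"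
    using spl tpl ne Lne by (cases lst) (simp_all add: LS RS bp B)
  from C[of tp "sp + p"] spl tpl show "e sp (sp + p) + (if lst then e (sp + p) (sp + p) else 0) = (if lst then e tp tp else 0) + e tp (tp + p)"
    using spl tpl ne Lne by (cases lst) (simp_all add: LS RS bp B)
  from C[of "tp + p" sp] spl tpl show "e (sp + p) sp = e (tp + p) tp"
    using spl tpl ne Lne by (cases lst) (simp_all add: LS RS bp B)
  from C[of "tp + p" "sp + p"] spl tpl show "e (sp + p) (sp + p) = (if lst then e (tp + p) tp else 0) + e (tp + p) (tp + p)"
    using spl tpl ne Lne by (cases lst) (simp_all add: LS RS bp B)
qed

definition blk :: "nat \<Rightarrow> 'k \<times> 'k \<times> 'k \<times> 'k" where
  "blk k = (e k k, e k (k + p), e (k + p) k, e (k + p) (k + p))"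

lemma blk_step:
  assumes k: "Suc k < p"
  shows "blk (Suc k) = blk k"
proof -
  have m: "k < p" using k by simp
  have nl: "Suc k \<noteq> p" using k by simp
  have nx: "nxt p k = Suc k" using k by (simp add: nxt_def)
  note eqs = letter_eqs[OF m]
  show ?thesis
  proof (cases "isDir (L ! k)")
    case True
    then have "bsrc L k = k" "btgt L k = Suc k" using nx by (auto simp: bsrc_def btgt_def)
    then show ?thesis using eqs nl by (simp add: blk_def)
  next
    case False
    then have "bsrc L k = Suc k" "btgt L k = k" using nx by (auto simp: bsrc_def btgt_def)
    then show ?thesis using eqs nl by (simp add: blk_def)
  qed
qed

lemma blk_const: "k < p \<Longrightarrow> blk k = blk 0"
proof (induction k)
  case (Suc k)
  then show ?case using blk_step[of k] by simp
qed simp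

lemma blk_last: "e p 0 = 0 \<and> e p p = e 0 0"
proof -
  define m where "m = p - 1"
  have m: "m < p" and lst: "Suc m = p" using p2 by (auto simp: m_def)
  have nx: "nxt p m = 0" using lst by (simp add: nxt_def)
  have b: "blk m = blk 0" by (rule blk_const[OF m])
  note eqs = letter_eqs[OF m]
  show ?thesis
  proof (cases "isDir (L ! m)")
    case True
    then have "bsrc L m = m" "btgt L m = 0" using nx by (auto simp: bsrc_def btgt_def)
    then show ?thesis using eqs lst b by (simp add: blk_def)
  next
    case False
    then have "bsrc L m = 0" "btgt L m = m" using nx by (auto simp: bsrc_def btgt_def)
    then show ?thesis using eqs lst b by (simp add: blk_def)
  qed
qed

lemma eform: "e j i = (if i < 2 * p \<and> j < 2 * p \<and> bpos p j = bpos p i then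
    (if j < p then (if i < p then e 0 0 else e 0 p) else (if i < p then 0 else e 0 0)) else 0)"
proof (cases "i < 2 * p \<and> j < 2 * p \<and> bpos p j = bpos p i")
  case True
  define k where "k = bpos p i"
  have k: "k < p" using True bpos_lt k_def by blast
  have b: "blk k = blk 0" by (rule blk_const[OF k])
  have l: "e p 0 = 0" "e p p = e 0 0" using blk_last by auto
  have ik: "i = k \<or> i = k + p" and jk: "j = k \<or> j = k + p" using True k_def by (auto simp: bpos_def split: if_splits)
  show ?thesis using ik jk b l k True by (auto simp: blk_def)
next
  case False
  then have z: "e j i = 0" using e_supp by blast
  show ?thesis unfolding if_not_P[OF False] by (rule z)
qed

end

lemma band_indec: "indecomposable (2 * p) (band_vert s t x L) (band_act L :: 'a \<Rightarrow> nat \<Rightarrow> nat \<Rightarrow> 'k::field)"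
  unfolding indecomposable_def
proof (intro conjI allI impI)
  show "0 < 2 * p" using p2 by linarith
  fix e :: "nat \<Rightarrow> nat \<Rightarrow> 'k"
  assume h: "is_endo (2 * p) (band_vert s t x L) (band_act L) e \<and> mmul (2 * p) e e = e"
  then have en: "is_endo (2 * p) (band_vert s t x L) (band_act L) e" and idem: "mmul (2 * p) e e = e" by auto
  define a where "a = e 0 0"
  define b where "b = e 0 p"
  have l: "e p 0 = 0" "e p p = a" using blk_last[OF en] a_def by auto
  have b0: "bpos p 0 = 0" "bpos p p = 0" by (auto simp: bpos_def)
  have Lne: "L \<noteq> []" using p2 by (cases L) auto
  have "mmul (2 * p) e e 0 0 = e 0 0 * e 0 0 + e 0 p * e p 0"
    using LS[OF en, of 0 e 0] p2 b0 Lne by simp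
  then have aa: "a * a = a" using idem l a_def by (metis add_0_right mult_zero_right)
  have "mmul (2 * p) e e 0 p = e 0 0 * e 0 p + e 0 p * e p p"
    using LS[OF en, of p e 0] p2 b0 Lne by simp
  then have "a * b + b * a = b" using idem l a_def b_def by metis
  then have ab: "2 * a * b = b" by (simp add: algebra_simps)
  have ef: "\<And>j i. e j i = (if i < 2 * p \<and> j < 2 * p \<and> bpos p j = bpos p i then
    (if j < p then (if i < p then a else b) else (if i < p then 0 else a)) else 0)"
    using eform[OF en] a_def b_def by blast
  from aa have "a = 0 \<or> a = 1" by (metis mult_cancel_right2 mult_zero_left)
  then show "e = (\<lambda>j i. 0) \<or> e = idm (2 * p)"
  proof
    assume a0: "a = 0"
    then have "b = 0" using ab by (metis mult_zero_right mult_zero_left)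
    then have "e = (\<lambda>j i. 0)" using a0 by (auto simp: ef fun_eq_iff)
    then show ?thesis by simp
  next
    assume a1: "a = 1"
    then have "2 * b = b" using ab by (metis mult_1_right mult.commute)
    then have "b + b = b + 0" by (metis mult_2 add_0_right)
    then have b0': "b = 0" by (rule add_left_imp_eq)
    have "e = idm (2 * p)"
    proof (intro ext)
      fix j i
      show "e j i = idm (2 * p) j i"
        unfolding ef idm_def using a1 b0' by (auto simp: bpos_def)
    qed
    then show ?thesis by simp
  qed
qed

lemma band_nonbrick: "\<exists>N vert (act :: 'a \<Rightarrow> nat \<Rightarrow> nat \<Rightarrow> 'k::field). is_rep V E s t R N vert act \<and>
           indecomposable N vert act \<and> \<not> end_division N vert act"
  using band_rep band_indec band_notdiv by blast

end


lemma nonbrick: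
  assumes qw: "quiver_wf V E s t" and st: "is_string V E s t R x L"
    and p0: "0 < length L"
    and cl: "smod_vert s t x L 0 = smod_vert s t x L (length L)"
    and cyc: "cycinj s t x L"
  shows "\<exists>N vert (act :: 'a \<Rightarrow> nat \<Rightarrow> nat \<Rightarrow> 'k::field). is_rep V E s t R N vert act \<and>
           indecomposable N vert act \<and> \<not> end_division N vert act"
proof (cases "isDir (L ! 0) = isDir (L ! (length L - 1))")
  case False
  have "length L \<noteq> 1"
  proof
    assume "length L = 1"
    then show False using False by simp
  qed
  then have "2 \<le> length L" using p0 by linarith
  then interpret bandset V E s t R x L using qw st cl cyc False by unfold_locales auto
  show ?thesis by (rule band_nonbrick)
next
  case same: True
  show ?thesis
  proof (cases "isDir (L ! 0)")
    case True
    then have d1: "isDir (L ! (length L - 1))" using same by simp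
    show ?thesis
      by (rule DD_nonbrick[OF st qw p0 cl cyc isDir_cases(1)[OF True] isDir_cases(1)[OF d1]])
  next
    case False
    then have d1: "\<not> isDir (L ! (length L - 1))" using same by simp
    let ?p = "length L"
    let ?L = "rev (map linv L)"
    let ?x = "smod_vert s t x L ?p"
    have st': "is_string V E s t R ?x ?L" by (rule rev_string(1)[OF qw st])
    have vv: "\<And>k. k \<le> ?p \<Longrightarrow> smod_vert s t ?x ?L k = smod_vert s t x L (?p - k)"
      by (rule rev_string(2)[OF qw st])
    have p0': "0 < length ?L" using p0 by simp
    have cl': "smod_vert s t ?x ?L 0 = smod_vert s t ?x ?L (length ?L)" using vv[of 0] vv[of ?p] cl by simp
    have cyc': "cycinj s t ?x ?L"
      unfolding cycinj_def
    proof (intro allI impI)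
      fix k l assume h: "k < l \<and> l \<le> length ?L \<and> \<not> (k = 0 \<and> l = length ?L)"
      have "smod_vert s t x L (?p - l) \<noteq> smod_vert s t x L (?p - k)"
      proof -
        have "?p - l < ?p - k" "?p - k \<le> ?p" "\<not> (?p - l = 0 \<and> ?p - k = ?p)" using h by auto
        then show ?thesis using cyc unfolding cycinj_def by blast
      qed
      then show "smod_vert s t ?x ?L k \<noteq> smod_vert s t ?x ?L l" using vv h by auto
    qed
    have a: "?L ! 0 = Dir (larr (L ! (?p - 1)))"
      using isDir_cases(2)[OF d1] p0 by (simp add: rev_nth) (metis linv.simps(2))
    have b: "?L ! (length ?L - 1) = Dir (larr (L ! 0))"
      using isDir_cases(2)[OF False] p0 by (simp add: rev_nth) (metis linv.simps(2))
    show ?thesis by (rule DD_nonbrick[OF st' qw p0' cl' cyc' a b])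
  qed
qed

lemma distinct_verts:
  assumes bg: "brick_gentle TYPE('k::field) V E s t R" and st: "is_string V E s t R x L"
    and ij: "i \<le> length L" "j \<le> length L" and eqv: "smod_vert s t x L i = smod_vert s t x L j"
  shows "i = j"
proof (rule ccontr)
  assume ne: "i \<noteq> j"
  have qw: "quiver_wf V E s t" using bg by (simp add: brick_gentle_def gentle_def)
  let ?v = "smod_vert s t x L"
  define P where "P d \<longleftrightarrow> (\<exists>i. 0 < d \<and> i + d \<le> length L \<and> ?v i = ?v (i + d))" for d
  have "\<exists>d. P d"
  proof (cases "i < j")
    case True
    have "P (j - i)" unfolding P_def using True ij eqv by (intro exI[of _ i]) auto
    then show ?thesis by blast
  next
    case False
    then have "j < i" using ne by simp
    have "P (i - j)" unfolding P_def using \<open>j < i\<close> ij eqv by (intro exI[of _ j]) auto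
    then show ?thesis by blast
  qed
  then have Pd: "P (LEAST d. P d)" by (rule LeastI_ex)
  define d where "d = (LEAST d. P d)"
  have mind: "\<And>d'. P d' \<Longrightarrow> d \<le> d'" unfolding d_def by (rule Least_le)
  from Pd obtain i0 where i0: "0 < d" "i0 + d \<le> length L" "?v i0 = ?v (i0 + d)"
    unfolding P_def d_def by blast
  let ?L = "take d (drop i0 L)"
  let ?x = "?v i0"
  have st': "is_string V E s t R ?x ?L" by (rule sub_string(1)[OF qw st i0(2)])
  have vv: "\<And>k. k \<le> d \<Longrightarrow> smod_vert s t ?x ?L k = ?v (i0 + k)"
    by (rule sub_string(2)[OF qw st i0(2)])
  have len: "length ?L = d" using i0(2) by simp
  have cl: "smod_vert s t ?x ?L 0 = smod_vert s t ?x ?L (length ?L)" using vv[of 0] vv[of d] i0 len by simp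
  have cyc: "cycinj s t ?x ?L"
    unfolding cycinj_def
  proof (intro allI impI)
    fix k l assume h: "k < l \<and> l \<le> length ?L \<and> \<not> (k = 0 \<and> l = length ?L)"
    show "smod_vert s t ?x ?L k \<noteq> smod_vert s t ?x ?L l"
    proof
      assume "smod_vert s t ?x ?L k = smod_vert s t ?x ?L l"
      then have "?v (i0 + k) = ?v (i0 + k + (l - k))" using vv h len by simp
      then have "P (l - k)" unfolding P_def using h len i0(2) by (intro exI[of _ "i0 + k"]) auto
      then have "d \<le> l - k" by (rule mind)
      then show False using h len by auto
    qed
  qed
  have lp: "0 < length ?L" using len i0(1) by simp
  obtain N vert and act :: "_ \<Rightarrow> nat \<Rightarrow> nat \<Rightarrow> 'k" where
    r: "is_rep V E s t R N vert act" "indecomposable N vert act" "\<not> end_division N vert act"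
    using nonbrick[OF qw st' lp cl cyc, where 'k='k] by blast
  then show False using bg unfolding brick_gentle_def by blast
qed

theorem lemma6p5:
  fixes V :: "'v set" and E :: "'a set" and s t :: "'a \<Rightarrow> 'v"
    and R :: "('a \<times> 'a) set" and x :: 'v and L :: "'a letter list" and c :: "nat \<Rightarrow> bool"
  assumes "brick_gentle TYPE('k::field) V E s t R"
    and "is_string V E s t R x L"
  shows "is_rep V (PiE E) (pis s t) (pit s t) (PiR R)
           (Suc (length (str L c))) (smod_vert (pis s t) (pit s t) x (str L c))
           (smod_act (str L c) :: 'a parr \<Rightarrow> nat \<Rightarrow> nat \<Rightarrow> 'k)
       \<and> end_is_field (Suc (length (str L c))) (smod_vert (pis s t) (pit s t) x (str L c))
           (smod_act (str L c) :: 'a parr \<Rightarrow> nat \<Rightarrow> nat \<Rightarrow> 'k)"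
proof
  have qw: "quiver_wf V E s t" using assms(1) by (simp add: brick_gentle_def gentle_def)
  have sst: "is_string V (PiE E) (pis s t) (pit s t) (PiR R) x (str L c)"
    by (rule str_string[OF assms(2)])
  show "is_rep V (PiE E) (pis s t) (pit s t) (PiR R)
           (Suc (length (str L c))) (smod_vert (pis s t) (pit s t) x (str L c))
           (smod_act (str L c) :: 'a parr \<Rightarrow> nat \<Rightarrow> nat \<Rightarrow> 'k)"
    by (rule string_rep[OF quiver_wf_Pi[OF qw] sst])
  show "end_is_field (Suc (length (str L c))) (smod_vert (pis s t) (pit s t) x (str L c))
           (smod_act (str L c) :: 'a parr \<Rightarrow> nat \<Rightarrow> nat \<Rightarrow> 'k)"
    unfolding end_is_field_def
  proof (intro allI impI)
    fix f :: "nat \<Rightarrow> nat \<Rightarrow> 'k"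
    let ?N = "Suc (length (str L c))"
    assume en: "is_endo ?N (smod_vert (pis s t) (pit s t) x (str L c)) (smod_act (str L c)) f"
    have nb: "noback (str L c)" by (rule string_noback[OF sst])
    have dg: "\<And>k. k \<le> length L \<Longrightarrow> f k k = f 0 0"
      by (rule diag_const[OF nb en]) simp
    have off: "\<And>j i. f j i \<noteq> 0 \<Longrightarrow> i < ?N \<and> j = i"
    proof -
      fix j i assume "f j i \<noteq> 0"
      then have h: "i < ?N" "j < ?N" "smod_vert (pis s t) (pit s t) x (str L c) i = smod_vert (pis s t) (pit s t) x (str L c) j"
        using en unfolding is_endo_def by blast+
      then have "smod_vert s t x L i = smod_vert s t x L j" by (simp add: str_vert)
      then have "i = j" using distinct_verts[OF assms] h by simp
      then show "i < ?N \<and> j = i" using h by simp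
    qed
    show "\<exists>c. f = (\<lambda>j i. c * idm ?N j i)"
    proof (intro exI ext)
      fix j i
      show "f j i = f 0 0 * idm ?N j i"
      proof (cases "f j i = 0")
        case True
        show ?thesis
        proof (cases "j = i \<and> i < ?N")
          case True2: True
          then have "f 0 0 = 0" using dg[of i] True by (metis less_Suc_eq_le str_len)
          then show ?thesis using True by simp
        next
          case False
          then show ?thesis using True unfolding idm_def by auto
        qed
      next
        case False
        then have "i < ?N" "j = i" using off by blast+
        then show ?thesis using dg[of i] unfolding idm_def by (metis less_Suc_eq_le mult_1_right str_len)
      qed
    qed
  qed
qed

end
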